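(* Let $\mathsf{\Sigma}\in\mathbb{R}^{N\times N_S}$ and $\mathsf{\Lambda}\in\mathbb{R}^{N\times N_L}$ be the Star-to-RWG and Loop-to-RWG matrices of a triangular surface mesh, and for $1\le n\le N_S$ (resp. $1\le n\le N_L$) let $\mathsf{\Sigma}_n=\mathsf{\Sigma}(\mathsf{\Sigma}^{\mathrm T}\mathsf{\Sigma})^+(\mathsf{\Sigma}^{\mathrm T}\mathsf{\Sigma})_n$ (resp. $\mathsf{\Lambda}_n=\mathsf{\Lambda}(\mathsf{\Lambda}^{\mathrm T}\mathsf{\Lambda})^+(\mathsf{\Lambda}^{\mathrm T}\mathsf{\Lambda})_n$) be the filtered Star (resp. Loop) matrices (see context). Then $$\mathsf{\Sigma}_n(\mathsf{\Sigma}_n^{\mathrm T}\mathsf{\Sigma}_n)^+\mathsf{\Sigma}_n^{\mathrm T}=\mathsf{\Sigma}\big((\mathsf{\Sigma}^{\mathrm T}\mathsf{\Sigma})_n\big)^+\mathsf{\Sigma}^{\mathrm T},\qquad \mathsf{\Lambda}_n(\mathsf{\Lambda}_n^{\mathrm T}\mathsf{\Lambda}_n)^+\mathsf{\Lambda}_n^{\mathrm T}=\mathsf{\Lambda}\big((\mathsf{\Lambda}^{\mathrm T}\mathsf{\Lambda})_n\big)^+\mathsf{\Lambda}^{\mathrm T}.$$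
   Context: Consider a closed triangulated surface with $N$ edges, $N_S$ triangles and $N_L$ vertices. Each edge $m$ is shared by two triangles $c_m^+$, $c_m^-$. $[\mathsf{\Sigma}]_{mn}=1$ if cell $n$ is $c_m^+$, $-1$ if cell $n$ is $c_m^-$, $0$ otherwise. $[\mathsf{\Lambda}]_{mn}=\pm1$ when vertex $n$ is an endpoint of edge $m$ (opposite signs for the two endpoints, fixed by the orientation convention), $0$ otherwise. $^+$ denotes the Moore–Penrose pseudo-inverse. For $\mathsf{X}\in\{\mathsf{\Sigma},\mathsf{\Lambda}\}$ with $N_x$ columns, fix an SVD $\mathsf{X}=\mathsf{U}_X\mathsf{S}_X\mathsf{V}_X^{\mathrm T}$ with $\mathsf{V}_X$ orthogonal $N_x\times N_x$ and singular values $\sigma_{X,1}\ge\dots\ge\sigma_{X,N_x}\ge0$, so $\mathsf{X}^{\mathrm T}\mathsf{X}=\mathsf{V}_X\mathrm{diag}(\sigma_{X,i}^2)\mathsf{V}_X^{\mathrm T}$. For $1\le n\le N_x$, $\mathsf{L}_{X,n}$ is diagonal with $[\mathsf{L}_{X,n}]_{ii}=\sigma_{X,i}$ if $i>N_x-n$ and $0$ otherwise, and $(\mathsf{X}^{\mathrm T}\mathsf{X})_n=\mathsf{V}_X\mathsf{L}_{X,n}^2\mathsf{V}_X^{\mathrm T}$. *)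

theory Defs
  imports "Jordan_Normal_Form.Matrix"
begin

definition pinv :: "real mat \<Rightarrow> real mat" where
  "pinv A = (THE B. B \<in> carrier_mat (dim_col A) (dim_row A) \<and>
              A * B * A = A \<and> B * A * B = B \<and>
              transpose_mat (A * B) = A * B \<and> transpose_mat (B * A) = B * A)"

definition orthogonal_mat :: "nat \<Rightarrow> real mat \<Rightarrow> bool" where
  "orthogonal_mat k Q \<longleftrightarrow> Q \<in> carrier_mat k k \<and>
      transpose_mat Q * Q = 1\<^sub>m k \<and> Q * transpose_mat Q = 1\<^sub>m k"

text \<open>Star-to-RWG matrix: entry (m,n) is 1 if cell n is c_m^+, -1 if cell n is c_m^-, 0 otherwise.\<close>
definition star_matrix :: "nat \<Rightarrow> nat \<Rightarrow> (nat \<Rightarrow> nat) \<Rightarrow> (nat \<Rightarrow> nat) \<Rightarrow> real mat" where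
  "star_matrix N NS cp cm = mat N NS (\<lambda>(m, n).
      if n = cp m then 1 else if n = cm m then -1 else 0)"

text \<open>Loop-to-RWG matrix: edge m has endpoints vp m (sign +1) and vm m (sign -1),
  the assignment being the orientation convention.\<close>
definition loop_matrix :: "nat \<Rightarrow> nat \<Rightarrow> (nat \<Rightarrow> nat) \<Rightarrow> (nat \<Rightarrow> nat) \<Rightarrow> real mat" where
  "loop_matrix N NL vp vm = mat N NL (\<lambda>(m, n).
      if n = vp m then 1 else if n = vm m then -1 else 0)"

definition is_svd :: "real mat \<Rightarrow> real mat \<Rightarrow> real mat \<Rightarrow> (nat \<Rightarrow> real) \<Rightarrow> bool" where
  "is_svd X U V \<sigma> \<longleftrightarrow>
     orthogonal_mat (dim_row X) U \<and> orthogonal_mat (dim_col X) V \<and>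
     (\<forall>i j. i \<le> j \<longrightarrow> j < dim_col X \<longrightarrow> \<sigma> j \<le> \<sigma> i) \<and>
     (\<forall>i < dim_col X. 0 \<le> \<sigma> i) \<and>
     X = U * mat (dim_row X) (dim_col X) (\<lambda>(i, j). if i = j then \<sigma> j else 0) * transpose_mat V \<and>
     transpose_mat X * X = V * mat (dim_col X) (dim_col X) (\<lambda>(i, j). if i = j then (\<sigma> j)^2 else 0)
        * transpose_mat V"

text \<open>L_{X,n}: diagonal, entry i (1-based) is sigma_i iff i > Nx - n; 0-based: i \<ge> Nx - n.\<close>
definition L_mat :: "nat \<Rightarrow> (nat \<Rightarrow> real) \<Rightarrow> nat \<Rightarrow> real mat" where
  "L_mat Nx \<sigma> n = mat Nx Nx (\<lambda>(i, j). if i = j \<and> Nx - n \<le> i then \<sigma> i else 0)"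

definition gram_n :: "real mat \<Rightarrow> (nat \<Rightarrow> real) \<Rightarrow> nat \<Rightarrow> real mat" where
  "gram_n V \<sigma> n = V * (L_mat (dim_row V) \<sigma> n * L_mat (dim_row V) \<sigma> n) * transpose_mat V"

definition filtered :: "real mat \<Rightarrow> real mat \<Rightarrow> (nat \<Rightarrow> real) \<Rightarrow> nat \<Rightarrow> real mat" where
  "filtered X V \<sigma> n = X * pinv (transpose_mat X * X) * gram_n V \<sigma> n"

end

theory Submission
  imports Defs
begin

definition dm :: "nat \<Rightarrow> nat \<Rightarrow> (nat \<Rightarrow> real) \<Rightarrow> real mat" where
  "dm r c f = mat r c (\<lambda>(i, j). if i = j then f i else 0)"

lemma dm_dims[simp]: "dim_row (dm r c f) = r" "dim_col (dm r c f) = c"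
  by (auto simp: dm_def)

lemma dm_index[simp]: "i < r \<Longrightarrow> j < c \<Longrightarrow> dm r c f $$ (i,j) = (if i = j then f i else 0)"
  by (auto simp: dm_def)

lemma transpose_dm[simp]: "transpose_mat (dm r c f) = dm c r f"
  by (rule eq_matI) auto

lemma dm_mult[simp]: "dm r k f * dm k c g = dm r c (\<lambda>i. if i < k then f i * g i else 0)"
proof (rule eq_matI)
  fix i j assume ij: "i < dim_row (dm r c (\<lambda>i. if i < k then f i * g i else 0))"
    "j < dim_col (dm r c (\<lambda>i. if i < k then f i * g i else 0))"
  then have i: "i < r" and j: "j < c" by auto
  have "(dm r k f * dm k c g) $$ (i, j) = (\<Sum>l\<in>{0..<k}. dm r k f $$ (i,l) * dm k c g $$ (l,j))"
    using i j by (simp add: scalar_prod_def)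
  also have "\<dots> = (\<Sum>l\<in>{0..<k}. if l = i then (if i = j then f i * g i else 0) else 0)"
    by (rule sum.cong) (use i j in auto)
  also have "\<dots> = (if i = j \<and> i < k then f i * g i else 0)"
    by (simp add: sum.delta)
  also have "\<dots> = dm r c (\<lambda>i. if i < k then f i * g i else 0) $$ (i, j)"
    using i j by simp
  finally show "(dm r k f * dm k c g) $$ (i, j) = dm r c (\<lambda>i. if i < k then f i * g i else 0) $$ (i, j)" .
qed auto

lemma dm_eq: "(\<And>i. i < r \<Longrightarrow> i < c \<Longrightarrow> f i = g i) \<Longrightarrow> dm r c f = dm r c g"
  by (rule eq_matI) auto

lemma massoc: assumes "dim_col (A::real mat) = dim_row B" "dim_col B = dim_row C" shows "A * B * C = A * (B * C)"
  by (rule assoc_mult_mat[OF carrier_matI[OF refl refl] carrier_matI[OF assms(1)[symmetric] refl]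
      carrier_matI[OF assms(2)[symmetric] refl]])

lemma transpose_mult_d: assumes "dim_col (A::real mat) = dim_row B" shows "transpose_mat (A * B) = transpose_mat B * transpose_mat A"
  by (rule transpose_mult[OF carrier_matI[OF refl refl] carrier_matI[OF assms[symmetric] refl]])

lemma dm_mult2[simp]: "dim_row Q = c \<Longrightarrow> dm r k f * (dm k c g * Q) = dm r c (\<lambda>i. if i < k then f i * g i else 0) * Q"
  by (subst massoc[symmetric]) auto

lemma cancelL: "transpose_mat W * W = 1\<^sub>m (dim_col W) \<Longrightarrow> dim_row Q = dim_col W \<Longrightarrow> transpose_mat W * (W * Q) = (Q::real mat)"
  by (subst massoc[symmetric]) auto

lemma cancelR: "W * transpose_mat W = 1\<^sub>m (dim_row W) \<Longrightarrow> dim_row Q = dim_row W \<Longrightarrow> W * (transpose_mat W * Q) = (Q::real mat)"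
  by (subst massoc[symmetric]) auto

lemma pinv_unique:
  fixes A B C :: "real mat"
  assumes A: "A \<in> carrier_mat r c" and B: "B \<in> carrier_mat c r" and C: "C \<in> carrier_mat c r"
    and b1: "A * B * A = A" and b2: "B * A * B = B" and b3: "transpose_mat (A * B) = A * B"
    and b4: "transpose_mat (B * A) = B * A"
    and c1: "A * C * A = A" and c2: "C * A * C = C" and c3: "transpose_mat (A * C) = A * C"
    and c4: "transpose_mat (C * A) = C * A"
  shows "B = C"
proof -
  note d = carrier_matD[OF A] carrier_matD[OF B] carrier_matD[OF C]
  have AT: "transpose_mat A = transpose_mat A * (A * C)"
  proof -
    have "transpose_mat A = transpose_mat (A * C * A)" using c1 by simp
    also have "\<dots> = transpose_mat A * transpose_mat (A * C)"
      using d by (simp add: transpose_mult_d)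
    finally show ?thesis using c3 by simp
  qed
  have AT2: "transpose_mat A = (B * A) * transpose_mat A"
  proof -
    have "transpose_mat A = transpose_mat (A * (B * A))" using b1 d by (simp add: massoc)
    also have "\<dots> = transpose_mat (B * A) * transpose_mat A"
      using d by (simp add: transpose_mult_d)
    finally show ?thesis using b4 by simp
  qed
  have ABA: "A * (B * (A * Y)) = A * Y" if "dim_row Y = c" for Y
    using b1 d that by (simp add: massoc[symmetric])
  have CAC: "C * (A * (C * Y)) = C * Y" if "dim_row Y = r" for Y
    using c2 d that by (simp add: massoc[symmetric])
  have "B = B * (A * B)" using b2 d by (simp add: massoc)
  also have "\<dots> = B * (transpose_mat B * transpose_mat A)"
    using b3 d by (metis transpose_mult_d)
  also have "\<dots> = B * (transpose_mat B * (transpose_mat A * (A * C)))"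
    using AT by simp
  also have "\<dots> = B * (transpose_mat (A * B) * (A * C))"
    using d by (simp add: transpose_mult_d massoc)
  also have "\<dots> = B * (A * C)"
    using b3 d ABA by (simp add: massoc)
  finally have 1: "B = B * (A * C)" .
  have "C = C * A * C" using c2 by simp
  also have "\<dots> = transpose_mat (C * A) * C" using c4 by simp
  also have "\<dots> = transpose_mat A * transpose_mat C * C" using d by (simp add: transpose_mult_d)
  also have "\<dots> = (B * A) * transpose_mat A * transpose_mat C * C" using AT2 by simp
  also have "\<dots> = (B * A) * (transpose_mat (C * A) * C)" using d by (simp add: transpose_mult_d massoc)
  also have "\<dots> = B * (A * C)"
  proof -
    have c2': "C * (A * C) = C" using c2 d by (simp add: massoc)
    show ?thesis using c4 c2' d by (simp add: massoc)
  qed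
  finally show ?thesis using 1 by simp
qed

lemma pinvI:
  assumes "B \<in> carrier_mat (dim_col A) (dim_row A)" "A * B * A = A" "B * A * B = B"
    "transpose_mat (A * B) = A * B" "transpose_mat (B * A) = B * A"
  shows "pinv A = B"
  unfolding pinv_def
proof (rule the_equality)
  show "B \<in> carrier_mat (dim_col A) (dim_row A) \<and> A * B * A = A \<and> B * A * B = B \<and>
    transpose_mat (A * B) = A * B \<and> transpose_mat (B * A) = B * A" using assms by (intro conjI)
  fix C assume CC: "C \<in> carrier_mat (dim_col A) (dim_row A) \<and> A * C * A = A \<and> C * A * C = C \<and>
    transpose_mat (A * C) = A * C \<and> transpose_mat (C * A) = C * A"
  from CC have c0: "C \<in> carrier_mat (dim_col A) (dim_row A)" and c1: "A * C * A = A"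
    and c2: "C * A * C = C" and c3: "transpose_mat (A * C) = A * C" and c4: "transpose_mat (C * A) = C * A"
    by auto
  have "B = C"
    by (rule pinv_unique[OF carrier_matI[OF refl refl] assms(1) c0 assms(2-5) c1 c2 c3 c4])
  then show "C = B" by (rule sym)
qed

lemma dd1[simp]: "(x::real) * (inverse x * x) = x" by (cases "x = 0") auto
lemma dd2[simp]: "inverse (x::real) * (x * inverse x) = inverse x" by (cases "x = 0") auto

lemma dd3: "(x::real) = 0 \<or> x * inverse x = 1" "(x::real) = 0 \<or> inverse x * x = 1" by (cases "x = 0"; simp)+

lemma pinv_svd:
  assumes U: "orthogonal_mat r U" and W: "orthogonal_mat c W"
  shows "pinv (U * (dm r c d * transpose_mat W)) = W * (dm c r (\<lambda>i. inverse (d i)) * transpose_mat U)"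
proof -
  have dU: "dim_row U = r" "dim_col U = r" "transpose_mat U * U = 1\<^sub>m (dim_col U)" "U * transpose_mat U = 1\<^sub>m (dim_row U)"
    using U by (auto simp: orthogonal_mat_def)
  have dW: "dim_row W = c" "dim_col W = c" "transpose_mat W * W = 1\<^sub>m (dim_col W)" "W * transpose_mat W = 1\<^sub>m (dim_row W)"
    using W by (auto simp: orthogonal_mat_def)
  note ss = dU dW massoc transpose_mult_d cancelL cancelR
  define A where "A = U * (dm r c d * transpose_mat W)"
  define B where "B = W * (dm c r (\<lambda>i. inverse (d i)) * transpose_mat U)"
  have AB: "A * B = U * (dm r r (\<lambda>i. if i < c then d i * inverse (d i) else 0) * transpose_mat U)"
    unfolding A_def B_def by (simp add: ss)
  have BA: "B * A = W * (dm c c (\<lambda>i. if i < r then inverse (d i) * d i else 0) * transpose_mat W)"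
    unfolding A_def B_def by (simp add: ss)
  have "pinv A = B"
  proof (rule pinvI)
    show "B \<in> carrier_mat (dim_col A) (dim_row A)"
      unfolding A_def B_def by (intro carrier_matI) (simp_all add: ss)
    show "A * B * A = A"
      unfolding AB unfolding A_def
      by (simp add: ss; (intro arg_cong2[where f="(*)"] refl dm_eq; simp add: dd3))
    show "B * A * B = B"
      unfolding BA unfolding B_def
      by (simp add: ss; (intro arg_cong2[where f="(*)"] refl dm_eq; simp add: dd3))
    show "transpose_mat (A * B) = A * B" unfolding AB by (simp add: ss)
    show "transpose_mat (B * A) = B * A" unfolding BA by (simp add: ss)
  qed
  then show ?thesis unfolding A_def B_def .
qed

lemma main_gen:
  assumes svd: "is_svd X U V \<sigma>"
  shows "filtered X V \<sigma> n * pinv (transpose_mat (filtered X V \<sigma> n) * filtered X V \<sigma> n)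
     * transpose_mat (filtered X V \<sigma> n) = X * pinv (gram_n V \<sigma> n) * transpose_mat X"
proof -
  define r where "r = dim_row X"
  define c where "c = dim_col X"
  have oU: "orthogonal_mat r U" and oV: "orthogonal_mat c V"
    and Xe: "X = U * mat r c (\<lambda>(i, j). if i = j then \<sigma> j else 0) * transpose_mat V"
    using svd unfolding is_svd_def r_def c_def by auto
  have dU: "dim_row U = r" "dim_col U = r" "transpose_mat U * U = 1\<^sub>m (dim_col U)" "U * transpose_mat U = 1\<^sub>m (dim_row U)"
    using oU by (auto simp: orthogonal_mat_def)
  have dV: "dim_row V = c" "dim_col V = c" "transpose_mat V * V = 1\<^sub>m (dim_col V)" "V * transpose_mat V = 1\<^sub>m (dim_row V)"
    using oV by (auto simp: orthogonal_mat_def)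
  note ss = dU dV massoc transpose_mult_d cancelL cancelR pinv_svd[OF oU oU] pinv_svd[OF oV oV]
  have S: "mat r c (\<lambda>(i, j). if i = j then \<sigma> j else 0) = dm r c \<sigma>"
    by (rule eq_matI) auto
  have X: "X = U * (dm r c \<sigma> * transpose_mat V)"
    unfolding Xe S by (simp add: ss)
  have Lm: "L_mat c \<sigma> n = dm c c (\<lambda>i. if c - n \<le> i then \<sigma> i else 0)"
    by (rule eq_matI) (auto simp: L_mat_def)
  have Gr: "gram_n V \<sigma> n = V * (dm c c (\<lambda>i. if c - n \<le> i then \<sigma> i * \<sigma> i else 0) * transpose_mat V)"
    unfolding gram_n_def dV(1) Lm
    by (simp add: ss; (intro arg_cong2[where f="(*)"] refl dm_eq; simp))
  have F: "filtered X V \<sigma> n = U * (dm r c (\<lambda>i. if c - n \<le> i then \<sigma> i else 0) * transpose_mat V)"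
    unfolding filtered_def Gr
    apply (subst (1 2 3) X)
    apply (simp add: ss; (intro arg_cong2[where f="(*)"] refl dm_eq))
    apply (auto simp: field_simps power2_eq_square)
    done
  show ?thesis
    unfolding F Gr
    apply (subst (1 2) X)
    apply (simp add: ss; (intro arg_cong2[where f="(*)"] refl dm_eq))
    apply (auto simp: field_simps power2_eq_square)
    done
qed

theorem mainTheorem4:
  fixes N NS NL :: nat
    and cp cm vp vm :: "nat \<Rightarrow> nat"
    and US VS UL VL :: "real mat"
    and \<sigma>S \<sigma>L :: "nat \<Rightarrow> real"
  defines "Sig \<equiv> star_matrix N NS cp cm"
      and "Lam \<equiv> loop_matrix N NL vp vm"
  assumes cells: "\<forall>m < N. cp m < NS \<and> cm m < NS \<and> cp m \<noteq> cm m"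
      and cells3: "\<forall>c < NS. card {m. m < N \<and> (cp m = c \<or> cm m = c)} = 3"
      and verts: "\<forall>m < N. vp m < NL \<and> vm m < NL \<and> vp m \<noteq> vm m"
      and svdS: "is_svd Sig US VS \<sigma>S"
      and svdL: "is_svd Lam UL VL \<sigma>L"
  shows "(\<forall>n. 1 \<le> n \<and> n \<le> NS \<longrightarrow>
            filtered Sig VS \<sigma>S n * pinv (transpose_mat (filtered Sig VS \<sigma>S n) * filtered Sig VS \<sigma>S n)
              * transpose_mat (filtered Sig VS \<sigma>S n)
          = Sig * pinv (gram_n VS \<sigma>S n) * transpose_mat Sig) \<and>
         (\<forall>n. 1 \<le> n \<and> n \<le> NL \<longrightarrow>
            filtered Lam VL \<sigma>L n * pinv (transpose_mat (filtered Lam VL \<sigma>L n) * filtered Lam VL \<sigma>L n)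
              * transpose_mat (filtered Lam VL \<sigma>L n)
          = Lam * pinv (gram_n VL \<sigma>L n) * transpose_mat Lam)"
  using main_gen[OF svdS] main_gen[OF svdL] by blast

end
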